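(* Suppose $\mathbb{Q}_1$ is a probability measure on $(\Omega,\mathcal F(T))$ such that each $S_{1,j}$, $j=1,\dots,d$, is a real-valued (in particular finite) nonnegative $\mathbb{Q}_1$-martingale (possibly hitting $0$). Define probability measures $\mathbb{Q}_i$ by $\frac{\mathrm d\mathbb{Q}_i}{\mathrm d\mathbb{Q}_1}=S_{i,1}(0)S_{1,i}(T)$, $i=1,\dots,d$. Then $(\mathbb{Q}_i)_i$ is a numéraire-consistent family, each $\mathbb{Q}_i$ is absolutely continuous with respect to $\mathbb{Q}_1$, and $\sum_i\mathbb{Q}_i\sim\mathbb{Q}_1$. Moreover, if $\overline{\mathbb{Q}}$ denotes the corresponding valuation measure with respect to the basket (i.e. $\overline{\mathbb Q}=\sum_i\overline S_i(0)\mathbb Q_i$), then for all $r\in[0,T]$ and $C\in\mathcal C$ with $\overline C\in L^1(\overline{\mathbb Q})$ one has $\mathbb{E}^{\overline{\mathbb{Q}}}_r[\overline C]=\overline S_1(r)\mathbb E^{\mathbb Q_1}_r[C_1]$, and for each $i$, on the event $\{i\in\mathfrak A(r)\}$, $$\frac{\mathbb{E}^{\overline{\mathbb{Q}}}_r[\overline C]}{\overline S_i(r)}=\mathbb{E}^{\mathbb{Q}_i}_r[C_i]+S_{i,1}(r)\,\mathbb{E}^{\mathbb{Q}_1}_r\big[C_1\mathbf 1_{\{S_{1,i}(T)=0\}}\big].$$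
   Context: Fix $T>0$, $d\in\mathbb N$, and a filtered space $(\Omega,\mathcal{F}(T),(\mathcal{F}(t))_{t\in[0,T]})$ with right-continuous filtration and trivial $\mathcal{F}(0)$. For $x,y\in[0,\infty]$ the product $xy$ is defined except when one is $0$ and the other is $\infty$. An exchange matrix is $s=(s_{i,j})\in[0,\infty]^{d\times d}$ with $s_{i,i}=1$ and $s_{i,j}s_{j,k}=s_{i,k}$ for all $i,j,k$ whenever the product is defined. $S=(S_{i,j})_{i,j=1}^d$ is a right-continuous adapted $[0,\infty]^{d\times d}$-valued process such that $S(t)$ is an exchange matrix for every $t$. Active currencies: $\mathfrak{A}(t)=\{i:\sum_jS_{i,j}(t)<\infty\}$, with $\mathfrak A(0)=\{1,\dots,d\}$. Basket prices: $\overline S_i=1/\sum_jS_{i,j}$. A value vector for an exchange matrix $s$ is $v\in[0,\infty]^d$ with $s_{i,j}v_j=v_i$ whenever defined; $\mathcal{C}$ is the set of $\mathcal{F}(T)$-measurable value vectors for $S(T)$, and for $C\in\mathcal C$, $\overline C=\frac{1}{|\mathfrak{A}(T)|}\sum_{j\in\mathfrak{A}(T)}\overline S_j(T)C_j$. A family $(\mathbb{Q}_i)_{i=1}^d$ of probability measures is numéraire-consistent if $\mathbb{E}^{\mathbb{Q}_i}[S_{i,j}(t)\mathbf{1}_A]=S_{i,j}(0)\,\mathbb{Q}_j(A\cap\{S_{j,i}(t)>0\})$ for all $i,j$, $t\in[0,T]$, $A\in\mathcal{F}(t)$. A valuation measure with respect to the basket is a probability measure under which $\overline S$ is a martingale.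 $\mathbb{E}^{\mathbb Q}_r$ is conditional expectation given $\mathcal F(r)$. *)

theory Defs
  imports "HOL-Probability.Probability"
begin

definition filtered_space :: "'a set \<Rightarrow> (real \<Rightarrow> 'a measure) \<Rightarrow> real \<Rightarrow> bool" where
  "filtered_space \<Omega> F T \<longleftrightarrow>
     0 < T \<and>
     (\<forall>t\<in>{0..T}. space (F t) = \<Omega>) \<and>
     (\<forall>s t. 0 \<le> s \<and> s \<le> t \<and> t \<le> T \<longrightarrow> sets (F s) \<subseteq> sets (F t)) \<and>
     (\<forall>t\<in>{0..<T}. sets (F t) = (\<Inter>u\<in>{t<..T}. sets (F u))) \<and>
     sets (F 0) = {{}, \<Omega>}"

definition martingale :: "'a measure \<Rightarrow> (real \<Rightarrow> 'a measure) \<Rightarrow> real \<Rightarrow> (real \<Rightarrow> 'a \<Rightarrow> real) \<Rightarrow> bool" where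
  "martingale M F T X \<longleftrightarrow>
     (\<forall>t\<in>{0..T}. X t \<in> borel_measurable (F t) \<and> integrable M (X t)) \<and>
     (\<forall>s t. 0 \<le> s \<and> s \<le> t \<and> t \<le> T \<longrightarrow>
        (AE \<omega> in M. real_cond_exp M (F s) (X t) \<omega> = X s \<omega>))"

definition prod_defined :: "ennreal \<Rightarrow> ennreal \<Rightarrow> bool" where
  "prod_defined x y \<longleftrightarrow> \<not> (x = 0 \<and> y = \<infinity>) \<and> \<not> (x = \<infinity> \<and> y = 0)"

text \<open>Currencies are indexed by 1..d.\<close>

definition exchange_matrix :: "nat \<Rightarrow> (nat \<Rightarrow> nat \<Rightarrow> ennreal) \<Rightarrow> bool" where
  "exchange_matrix d s \<longleftrightarrow>
     (\<forall>i\<in>{1..d}. s i i = 1) \<and>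
     (\<forall>i\<in>{1..d}. \<forall>j\<in>{1..d}. \<forall>k\<in>{1..d}.
        prod_defined (s i j) (s j k) \<longrightarrow> s i j * s j k = s i k)"

definition value_vector :: "nat \<Rightarrow> (nat \<Rightarrow> nat \<Rightarrow> ennreal) \<Rightarrow> (nat \<Rightarrow> ennreal) \<Rightarrow> bool" where
  "value_vector d s v \<longleftrightarrow>
     (\<forall>i\<in>{1..d}. \<forall>j\<in>{1..d}. prod_defined (s i j) (v j) \<longrightarrow> s i j * v j = v i)"

text \<open>The process S : time, omega, i, j.\<close>

definition active :: "nat \<Rightarrow> (real \<Rightarrow> 'a \<Rightarrow> nat \<Rightarrow> nat \<Rightarrow> ennreal) \<Rightarrow> real \<Rightarrow> 'a \<Rightarrow> nat set" where
  "active d S t \<omega> = {i\<in>{1..d}. (\<Sum>j\<in>{1..d}. S t \<omega> i j) < \<infinity>}"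

definition basket :: "nat \<Rightarrow> (real \<Rightarrow> 'a \<Rightarrow> nat \<Rightarrow> nat \<Rightarrow> ennreal) \<Rightarrow> real \<Rightarrow> 'a \<Rightarrow> nat \<Rightarrow> ennreal" where
  "basket d S t \<omega> i = 1 / (\<Sum>j\<in>{1..d}. S t \<omega> i j)"

text \<open>S(0) is deterministic (F(0) is trivial); its value is read off at an arbitrary point.\<close>

definition initial :: "'a set \<Rightarrow> (real \<Rightarrow> 'a \<Rightarrow> nat \<Rightarrow> nat \<Rightarrow> ennreal) \<Rightarrow> nat \<Rightarrow> nat \<Rightarrow> ennreal" where
  "initial \<Omega> S i j = S 0 (SOME \<omega>. \<omega> \<in> \<Omega>) i j"

definition exchange_process ::
  "nat \<Rightarrow> 'a set \<Rightarrow> (real \<Rightarrow> 'a measure) \<Rightarrow> real \<Rightarrow> (real \<Rightarrow> 'a \<Rightarrow> nat \<Rightarrow> nat \<Rightarrow> ennreal) \<Rightarrow> bool" where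
  "exchange_process d \<Omega> F T S \<longleftrightarrow>
     (\<forall>i\<in>{1..d}. \<forall>j\<in>{1..d}.
        (\<forall>t\<in>{0..T}. (\<lambda>\<omega>. S t \<omega> i j) \<in> borel_measurable (F t)) \<and>
        (\<forall>\<omega>\<in>\<Omega>. \<forall>t\<in>{0..<T}. continuous (at t within {t..T}) (\<lambda>s. S s \<omega> i j))) \<and>
     (\<forall>t\<in>{0..T}. \<forall>\<omega>\<in>\<Omega>. exchange_matrix d (S t \<omega>)) \<and>
     (\<forall>\<omega>\<in>\<Omega>. active d S 0 \<omega> = {1..d})"

definition claims ::
  "nat \<Rightarrow> 'a set \<Rightarrow> (real \<Rightarrow> 'a measure) \<Rightarrow> real \<Rightarrow> (real \<Rightarrow> 'a \<Rightarrow> nat \<Rightarrow> nat \<Rightarrow> ennreal)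
     \<Rightarrow> ('a \<Rightarrow> nat \<Rightarrow> ennreal) set" where
  "claims d \<Omega> F T S = {C. (\<forall>i\<in>{1..d}. (\<lambda>\<omega>. C \<omega> i) \<in> borel_measurable (F T)) \<and>
                          (\<forall>\<omega>\<in>\<Omega>. value_vector d (S T \<omega>) (C \<omega>))}"

definition basket_claim ::
  "nat \<Rightarrow> real \<Rightarrow> (real \<Rightarrow> 'a \<Rightarrow> nat \<Rightarrow> nat \<Rightarrow> ennreal) \<Rightarrow> ('a \<Rightarrow> nat \<Rightarrow> ennreal) \<Rightarrow> 'a \<Rightarrow> ennreal" where
  "basket_claim d T S C \<omega> =
     (1 / of_nat (card (active d S T \<omega>))) *
     (\<Sum>j\<in>active d S T \<omega>. basket d S T \<omega> j * C \<omega> j)"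

definition numeraire_consistent ::
  "nat \<Rightarrow> 'a set \<Rightarrow> (real \<Rightarrow> 'a measure) \<Rightarrow> real \<Rightarrow> (real \<Rightarrow> 'a \<Rightarrow> nat \<Rightarrow> nat \<Rightarrow> ennreal)
     \<Rightarrow> (nat \<Rightarrow> 'a measure) \<Rightarrow> bool" where
  "numeraire_consistent d \<Omega> F T S Q \<longleftrightarrow>
     (\<forall>i\<in>{1..d}. \<forall>j\<in>{1..d}. \<forall>t\<in>{0..T}. \<forall>A\<in>sets (F t).
        (\<integral>\<^sup>+\<omega>. S t \<omega> i j * indicator A \<omega> \<partial>Q i)
          = initial \<Omega> S i j * emeasure (Q j) (A \<inter> {\<omega>\<in>\<Omega>. 0 < S t \<omega> j i}))"

definition weighted_sum_measure ::
  "'a set \<Rightarrow> 'a set set \<Rightarrow> nat set \<Rightarrow> (nat \<Rightarrow> ennreal) \<Rightarrow> (nat \<Rightarrow> 'a measure) \<Rightarrow> 'a measure" where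
  "weighted_sum_measure \<Omega> \<Sigma> I w Q = measure_of \<Omega> \<Sigma> (\<lambda>A. \<Sum>i\<in>I. w i * emeasure (Q i) A)"

definition equivalent_measures :: "'a measure \<Rightarrow> 'a measure \<Rightarrow> bool" where
  "equivalent_measures M N \<longleftrightarrow> absolutely_continuous M N \<and> absolutely_continuous N M"

end

theory Submission
  imports Defs
begin


lemma em_mult:
  assumes "exchange_matrix d m" "i \<in> {1..d}" "j \<in> {1..d}" "k \<in> {1..d}"
    "m i j \<noteq> 0" "m i j \<noteq> \<infinity>"
  shows "m i j * m j k = m i k"
  using assms unfolding exchange_matrix_def prod_defined_def by auto

lemma em_one:
  assumes "exchange_matrix d m" "i \<in> {1..d}" "j \<in> {1..d}"
    "m i j \<noteq> 0" "m i j \<noteq> \<infinity>"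
  shows "m i j * m j i = 1"
  using em_mult[OF assms(1,2,3,2,4,5)] assms(1,2) unfolding exchange_matrix_def by auto

lemma ennreal_mult_one_inv:
  fixes a b :: ennreal assumes "a * b = 1" shows "b = inverse a"
proof -
  have "a \<noteq> 0" using assms by auto
  have "a \<noteq> \<infinity>" using assms by (cases "b = 0") (auto simp: ennreal_mult_eq_top_iff)
  have "a * inverse a = 1" using ennreal_divide_self[of a] \<open>a \<noteq> 0\<close> \<open>a \<noteq> \<infinity>\<close>
    by (simp add: divide_ennreal_def top.not_eq_extremum)
  then have "b = (a * b) * inverse a" by (metis mult.assoc mult.commute mult_1_right)
  then show ?thesis using assms by simp
qed

lemma em_inv:
  assumes "exchange_matrix d m" "i \<in> {1..d}" "j \<in> {1..d}"
    "m i j \<noteq> 0" "m i j \<noteq> \<infinity>"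
  shows "m j i = inverse (m i j)"
  using em_one[OF assms] ennreal_mult_one_inv by blast

lemma em_pos:
  assumes "exchange_matrix d m" "i \<in> {1..d}" "j \<in> {1..d}"
    "m i j \<noteq> \<infinity>" "m j i \<noteq> \<infinity>"
  shows "m i j \<noteq> 0"
proof
  assume h: "m i j = 0"
  have "prod_defined (m i j) (m j i)" using assms h unfolding prod_defined_def by auto
  then have "m i j * m j i = m i i" using assms unfolding exchange_matrix_def by auto
  then show False using h assms unfolding exchange_matrix_def by auto
qed

lemma em_rowsum:
  assumes "exchange_matrix d m" "i \<in> {1..d}" "j \<in> {1..d}"
    "m i j \<noteq> 0" "m i j \<noteq> \<infinity>"
  shows "(\<Sum>k\<in>{1..d}. m i k) = m i j * (\<Sum>k\<in>{1..d}. m j k)"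
  by (simp add: sum_distrib_left em_mult[OF assms(1,2,3) _ assms(4,5)])




lemma sum_row_ge: "j \<in> {1..(d::nat)} \<Longrightarrow> m i j \<le> (\<Sum>k\<in>{1..d}. m i k :: ennreal)"
  by (rule member_le_sum) auto

lemma em_E1:
  assumes em: "exchange_matrix d m" and i: "i \<in> {1..d}" and j: "j \<in> {1..d}" and d: "1 \<le> d"
    and fi: "m 1 i \<noteq> \<infinity>" and fj: "m 1 j \<noteq> \<infinity>"
  shows "m i j * m 1 i = (if 0 < m j i then m 1 j else 0)"
proof -
  have one: "1 \<in> {1..d}" using d by auto
  show ?thesis
  proof (cases "m 1 i = 0")
    case True
    show ?thesis
    proof (cases "m 1 j = 0")
      case False
      have "m j 1 = inverse (m 1 j)" using em_inv[OF em one j False fj] .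
      then have "m j 1 \<noteq> \<infinity>" using False by simp
      moreover have "m j 1 \<noteq> 0" using em_pos[OF em j one _ fj] \<open>m j 1 \<noteq> \<infinity>\<close> by blast
      ultimately have "m j 1 * m 1 i = m j i" using em_mult[OF em j one i] by blast
      then show ?thesis using True by simp
    qed (use True in simp)
  next
    case False
    have a: "m 1 i * m i j = m 1 j" using em_mult[OF em one i j False fi] .
    show ?thesis
    proof (cases "m 1 j = 0")
      case True then show ?thesis using a by (simp add: mult.commute)
    next
      case F2: False
      have "m j 1 = inverse (m 1 j)" using em_inv[OF em one j F2 fj] .
      then have "m j 1 \<noteq> \<infinity>" using F2 by simp
      moreover have "m j 1 \<noteq> 0" using em_pos[OF em j one _ fj] \<open>m j 1 \<noteq> \<infinity>\<close> by blast
      ultimately have "m j 1 * m 1 i = m j i" using em_mult[OF em j one i] by blast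
      then have "0 < m j i" using False \<open>m j 1 \<noteq> 0\<close> by (metis mult_eq_0_iff zero_less_iff_neq_zero)
      then show ?thesis using a by (simp add: mult.commute)
    qed
  qed
qed

lemma em_active_facts:
  assumes em: "exchange_matrix d m" and i: "i \<in> {1..d}" and d: "1 \<le> d"
    and act: "(\<Sum>k\<in>{1..d}. m i k) < \<infinity>" and fi: "m 1 i \<noteq> \<infinity>"
  shows "m 1 i \<noteq> 0" "m i 1 \<noteq> \<infinity>" "m i 1 \<noteq> 0" "m i 1 * m 1 i = 1"
    "(\<Sum>k\<in>{1..d}. m 1 k) = m 1 i * (\<Sum>k\<in>{1..d}. m i k)"
    "(\<Sum>k\<in>{1..d}. m i k) \<noteq> 0"
proof -
  have one: "1 \<in> {1..d}" using d by auto
  show f: "m i 1 \<noteq> \<infinity>" using le_less_trans[OF sum_row_ge[OF one, of m i] act] by auto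
  show p: "m 1 i \<noteq> 0" using em_pos[OF em one i fi f] .
  show "m i 1 \<noteq> 0" using em_pos[OF em i one f fi] .
  then show "m i 1 * m 1 i = 1" using em_one[OF em i one _ f] by blast
  show "(\<Sum>k\<in>{1..d}. m 1 k) = m 1 i * (\<Sum>k\<in>{1..d}. m i k)" using em_rowsum[OF em one i p fi] .
  have "m i i = 1" using em i unfolding exchange_matrix_def by auto
  then show "(\<Sum>k\<in>{1..d}. m i k) \<noteq> 0" using sum_row_ge[OF i, of m i] by (metis not_one_le_zero)
qed

lemma ennreal_inv_mult_cancel:
  fixes a :: ennreal assumes "a \<noteq> 0" "a \<noteq> \<infinity>" shows "inverse a * a = 1"
  using ennreal_divide_self[of a] assms by (simp add: divide_ennreal_def top.not_eq_extremum mult.commute)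

lemma ennreal_inv_inv:
  fixes a :: ennreal assumes "a \<noteq> 0" "a \<noteq> \<infinity>" shows "inverse (inverse a) = a"
  using ennreal_mult_one_inv[of "inverse a" a] ennreal_inv_mult_cancel[OF assms] by simp

lemma em_F2:
  assumes em: "exchange_matrix d m" and i: "i \<in> {1..d}" and d: "1 \<le> d"
    and act: "(\<Sum>k\<in>{1..d}. m i k) < \<infinity>" and fi: "m 1 i \<noteq> \<infinity>"
  shows "(1 / (\<Sum>k\<in>{1..d}. m 1 k) * N) / (1 / (\<Sum>k\<in>{1..d}. m i k)) = m i 1 * N"
proof -
  note f = em_active_facts[OF assms]
  define \<tau> where "\<tau> = (\<Sum>k\<in>{1..d}. m i k)"
  have t0: "\<tau> \<noteq> 0" and tf: "\<tau> \<noteq> \<infinity>" using f(6) act unfolding \<tau>_def by auto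
  have "m i 1 = inverse (m 1 i)" using f(4) ennreal_mult_one_inv[of "m 1 i" "m i 1"] by (simp add: mult.commute)
  have "(1 / (m 1 i * \<tau>) * N) / (1 / \<tau>) = inverse (m 1 i) * (inverse \<tau> * \<tau>) * N"
    using fi tf by (simp add: divide_ennreal_def ennreal_inverse_mult top.not_eq_extremum
        ennreal_inv_inv[OF t0 tf] mult_ac)
  also have "\<dots> = m i 1 * N" using ennreal_inv_mult_cancel[OF t0 tf] \<open>m i 1 = inverse (m 1 i)\<close> by simp
  finally show ?thesis using f(5) unfolding \<tau>_def by simp
qed

lemma value_E2:
  assumes vv: "value_vector d m v" and i: "i \<in> {1..d}" and d: "1 \<le> d" and fi: "m 1 i \<noteq> \<infinity>"
  shows "v i * m 1 i = (if m 1 i = 0 then 0 else v 1)"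
proof (cases "m 1 i = 0")
  case False
  then have "prod_defined (m 1 i) (v i)" using fi unfolding prod_defined_def by auto
  then have "m 1 i * v i = v 1" using vv i d unfolding value_vector_def by auto
  then show ?thesis using False by (simp add: mult.commute)
qed simp

lemma value_BCj:
  assumes em: "exchange_matrix d m" and vv: "value_vector d m v" and j: "j \<in> {1..d}" and d: "1 \<le> d"
    and act: "(\<Sum>k\<in>{1..d}. m j k) < \<infinity>" and fj: "m 1 j \<noteq> \<infinity>"
  shows "1 / (\<Sum>k\<in>{1..d}. m j k) * v j = 1 / (\<Sum>k\<in>{1..d}. m 1 k) * v 1"
proof -
  note f = em_active_facts[OF em j d act fj]
  define \<tau> where "\<tau> = (\<Sum>k\<in>{1..d}. m j k)"
  have t0: "\<tau> \<noteq> 0" and tf: "\<tau> \<noteq> \<infinity>" using f(6) act unfolding \<tau>_def by auto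
  have "v j * m 1 j = v 1" using value_E2[OF vv j d fj] f(1) by simp
  then have "1 / (\<Sum>k\<in>{1..d}. m 1 k) * v 1 = inverse (m 1 j * \<tau>) * (m 1 j * v j)"
    using f(5) unfolding \<tau>_def by (simp add: divide_ennreal_def mult.commute)
  also have "\<dots> = inverse \<tau> * (inverse (m 1 j) * m 1 j) * v j"
    using fj tf by (simp add: ennreal_inverse_mult top.not_eq_extremum mult_ac)
  also have "\<dots> = 1 / \<tau> * v j" using ennreal_inv_mult_cancel[OF f(1) fj] by (simp add: divide_ennreal_def)
  finally show ?thesis unfolding \<tau>_def by simp
qed




lemma basket_claim_eq:
  assumes em: "exchange_matrix d (S T \<omega>)" and vv: "value_vector d (S T \<omega>) (C \<omega>)" and d: "1 \<le> d"
    and fin: "\<forall>k\<in>{1..d}. S T \<omega> 1 k \<noteq> \<infinity>"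
  shows "basket_claim d T S C \<omega> = basket d S T \<omega> 1 * C \<omega> 1"
proof -
  define A where "A = active d S T \<omega>"
  define x where "x = basket d S T \<omega> 1 * C \<omega> 1"
  have Asub: "A \<subseteq> {1..d}" unfolding A_def active_def by auto
  have finA: "finite A" using Asub finite_subset by blast
  have "(\<Sum>k\<in>{1..d}. S T \<omega> 1 k) < \<infinity>" using fin by (simp add: top.not_eq_extremum)
  then have oneA: "1 \<in> A" using d unfolding A_def active_def by auto
  have eq: "basket d S T \<omega> j * C \<omega> j = x" if "j \<in> A" for j
    using value_BCj[OF em vv _ d, of j] that fin d unfolding A_def active_def x_def basket_def by auto
  have "basket_claim d T S C \<omega> = 1 / of_nat (card A) * (of_nat (card A) * x)"
    unfolding basket_claim_def A_def[symmetric] using eq by simp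
  also have "\<dots> = x"
  proof -
    have c: "card A \<noteq> 0" using finA oneA by auto
    have "(of_nat (card A) :: ennreal) \<noteq> 0" "(of_nat (card A) :: ennreal) \<noteq> \<infinity>" using c by auto
    from ennreal_inv_mult_cancel[OF this] show ?thesis by (simp add: divide_ennreal_def mult.assoc[symmetric])
  qed
  finally show ?thesis unfolding x_def .
qed

locale setting =
  fixes d :: nat and T :: real and F :: "real \<Rightarrow> 'a measure"
    and S :: "real \<Rightarrow> 'a \<Rightarrow> nat \<Rightarrow> nat \<Rightarrow> ennreal"
    and Q1 :: "'a measure" and Q :: "nat \<Rightarrow> 'a measure"
  assumes d: "1 \<le> d"
    and filt: "filtered_space (space Q1) F T"
    and proc: "exchange_process d (space Q1) F T S"
    and Q1: "prob_space Q1" and sQ1: "sets Q1 = sets (F T)"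
    and mart: "\<forall>j\<in>{1..d}. (\<forall>t\<in>{0..T}. \<forall>\<omega>\<in>space Q1. S t \<omega> 1 j < \<infinity>) \<and>
                  martingale Q1 F T (\<lambda>t \<omega>. enn2real (S t \<omega> 1 j))"
    and Q_def: "\<forall>i\<in>{1..d}. Q i = density Q1 (\<lambda>\<omega>. initial (space Q1) S i 1 * S T \<omega> 1 i)"
begin

abbreviation "\<Omega> \<equiv> space Q1"
definition "\<omega>0 = (SOME \<omega>. \<omega> \<in> \<Omega>)"
definition "s i j = initial \<Omega> S i j"

lemma one_in: "1 \<in> {1..d}" using d by auto

lemma \<omega>0_in: "\<omega>0 \<in> \<Omega>"
  unfolding \<omega>0_def using prob_space.not_empty[OF Q1] by (simp add: some_in_eq)

lemma Tpos: "0 < T" using filt unfolding filtered_space_def by auto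
lemma T_in: "T \<in> {0..T}" and z_in: "0 \<in> {0..T}" using Tpos by auto

lemma spaceF: "t \<in> {0..T} \<Longrightarrow> space (F t) = \<Omega>"
  using filt unfolding filtered_space_def by auto

lemma setsF: "t \<in> {0..T} \<Longrightarrow> sets (F t) \<subseteq> sets Q1"
  using filt sQ1 unfolding filtered_space_def by auto

lemma subalg: "t \<in> {0..T} \<Longrightarrow> subalgebra Q1 (F t)"
  unfolding subalgebra_def using spaceF setsF by auto

lemma fsub: "t \<in> {0..T} \<Longrightarrow> finite_measure_subalgebra Q1 (F t)"
  unfolding finite_measure_subalgebra_def finite_measure_subalgebra_axioms_def
  using subalg Q1 prob_space.axioms(1) by blast

lemma sfsub: "t \<in> {0..T} \<Longrightarrow> sigma_finite_subalgebra Q1 (F t)"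
  using fsub finite_measure_subalgebra_is_sigma_finite by blast

lemma measF: "t \<in> {0..T} \<Longrightarrow> f \<in> borel_measurable (F t) \<Longrightarrow> f \<in> borel_measurable Q1"
  using measurable_from_subalg subalg by blast

lemma meas_S: "i \<in> {1..d} \<Longrightarrow> j \<in> {1..d} \<Longrightarrow> t \<in> {0..T} \<Longrightarrow> (\<lambda>\<omega>. S t \<omega> i j) \<in> borel_measurable (F t)"
  using proc unfolding exchange_process_def by auto

lemma meas_SQ: "i \<in> {1..d} \<Longrightarrow> j \<in> {1..d} \<Longrightarrow> t \<in> {0..T} \<Longrightarrow> (\<lambda>\<omega>. S t \<omega> i j) \<in> borel_measurable Q1"
  using meas_S measF by blast

lemma em: "t \<in> {0..T} \<Longrightarrow> \<omega> \<in> \<Omega> \<Longrightarrow> exchange_matrix d (S t \<omega>)"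
  using proc unfolding exchange_process_def by auto

lemma fin1: "j \<in> {1..d} \<Longrightarrow> t \<in> {0..T} \<Longrightarrow> \<omega> \<in> \<Omega> \<Longrightarrow> S t \<omega> 1 j \<noteq> \<infinity>"
proof -
  assume "j \<in> {1..d}" "t \<in> {0..T}" "\<omega> \<in> \<Omega>"
  then have "S t \<omega> 1 j < \<infinity>" using mart by blast
  then show ?thesis by simp
qed

lemma S0_const: assumes "\<omega> \<in> \<Omega>" "i \<in> {1..d}" "j \<in> {1..d}" shows "S 0 \<omega> i j = s i j"
proof -
  have m: "(\<lambda>\<omega>. S 0 \<omega> i j) \<in> borel_measurable (F 0)" using meas_S assms z_in by blast
  have "(\<lambda>\<omega>. S 0 \<omega> i j) -` {S 0 \<omega>0 i j} \<inter> space (F 0) \<in> sets (F 0)"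
    by (rule measurable_sets[OF m]) simp
  then have "(\<lambda>\<omega>. S 0 \<omega> i j) -` {S 0 \<omega>0 i j} \<inter> \<Omega> \<in> {{}, \<Omega>}"
    using spaceF[OF z_in] filt unfolding filtered_space_def by auto
  moreover have "\<omega>0 \<in> (\<lambda>\<omega>. S 0 \<omega> i j) -` {S 0 \<omega>0 i j} \<inter> \<Omega>" using \<omega>0_in by auto
  ultimately have "(\<lambda>\<omega>. S 0 \<omega> i j) -` {S 0 \<omega>0 i j} \<inter> \<Omega> = \<Omega>" by auto
  then show ?thesis using assms(1) unfolding s_def initial_def \<omega>0_def[symmetric] by auto
qed

lemma em0: "exchange_matrix d (s)"
proof -
  have "exchange_matrix d (S 0 \<omega>0)" using em z_in \<omega>0_in by blast
  then show ?thesis unfolding exchange_matrix_def using S0_const[OF \<omega>0_in] by auto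
qed

lemma act0: "i \<in> {1..d} \<Longrightarrow> (\<Sum>k\<in>{1..d}. s i k) < \<infinity>"
proof -
  assume i: "i \<in> {1..d}"
  have "active d S 0 \<omega>0 = {1..d}" using proc \<omega>0_in unfolding exchange_process_def by auto
  then have "(\<Sum>k\<in>{1..d}. S 0 \<omega>0 i k) < \<infinity>" using i unfolding active_def by blast
  moreover have "(\<Sum>k\<in>{1..d}. S 0 \<omega>0 i k) = (\<Sum>k\<in>{1..d}. s i k)"
    using S0_const[OF \<omega>0_in i] by (intro sum.cong) auto
  ultimately show ?thesis by metis
qed

lemma fin0: "j \<in> {1..d} \<Longrightarrow> s 1 j \<noteq> \<infinity>"
  using fin1[OF _ z_in \<omega>0_in] S0_const[OF \<omega>0_in one_in] by auto

lemma mart_A: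
  assumes j: "j \<in> {1..d}" and t: "t \<in> {0..T}" and A: "A \<in> sets (F t)"
  shows "(\<integral>\<^sup>+\<omega>. S T \<omega> 1 j * indicator A \<omega> \<partial>Q1) = (\<integral>\<^sup>+\<omega>. S t \<omega> 1 j * indicator A \<omega> \<partial>Q1)"
proof -
  interpret sigma_finite_subalgebra Q1 "F t" using sfsub[OF t] .
  define x where "x = (\<lambda>u \<omega>. enn2real (S u \<omega> 1 j))"
  have M: "martingale Q1 F T x" using mart j unfolding x_def by auto
  have intx: "integrable Q1 (x u)" if "u \<in> {0..T}" for u
    using M that unfolding martingale_def by auto
  have mx: "x u \<in> borel_measurable Q1" if "u \<in> {0..T}" for u
    using M that measF unfolding martingale_def by auto
  have AQ: "A \<in> sets Q1" using A setsF t by auto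
  have eqx: "(\<integral>\<^sup>+\<omega>. S u \<omega> 1 j * indicator A \<omega> \<partial>Q1) = ennreal (\<integral>\<omega>. indicator A \<omega> *\<^sub>R x u \<omega> \<partial>Q1)"
    if u: "u \<in> {0..T}" for u
  proof -
    have "(\<integral>\<^sup>+\<omega>. S u \<omega> 1 j * indicator A \<omega> \<partial>Q1) = (\<integral>\<^sup>+\<omega>. ennreal (indicator A \<omega> *\<^sub>R x u \<omega>) \<partial>Q1)"
    proof (rule nn_integral_cong)
      fix \<omega> assume "\<omega> \<in> space Q1"
      then have "S u \<omega> 1 j = ennreal (x u \<omega>)" using fin1[OF j u] unfolding x_def
        by (simp add: ennreal_enn2real_if)
      then show "S u \<omega> 1 j * indicator A \<omega> = ennreal (indicator A \<omega> *\<^sub>R x u \<omega>)"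
        by (simp split: split_indicator)
    qed
    also have "\<dots> = ennreal (\<integral>\<omega>. indicator A \<omega> *\<^sub>R x u \<omega> \<partial>Q1)"
      by (rule nn_integral_eq_integral[OF integrable_mult_indicator[OF AQ intx[OF u]]])
         (auto simp: x_def split: split_indicator)
    finally show ?thesis .
  qed
  have ae: "AE \<omega> in Q1. real_cond_exp Q1 (F t) (x T) \<omega> = x t \<omega>"
    using M t unfolding martingale_def by auto
  have "(\<integral>\<omega>. indicator A \<omega> *\<^sub>R x T \<omega> \<partial>Q1) = (\<integral>\<omega>. indicator A \<omega> *\<^sub>R real_cond_exp Q1 (F t) (x T) \<omega> \<partial>Q1)"
    using real_cond_exp_intA[OF intx[OF T_in] A] unfolding set_lebesgue_integral_def .
  also have "\<dots> = (\<integral>\<omega>. indicator A \<omega> *\<^sub>R x t \<omega> \<partial>Q1)"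
    apply (rule integral_cong_AE)
    using AQ mx[OF t] ae by auto
  finally show ?thesis using eqx[OF T_in] eqx[OF t] by simp
qed

lemma mart_Y:
  assumes j: "j \<in> {1..d}" and t: "t \<in> {0..T}" and Y: "Y \<in> borel_measurable (F t)"
  shows "(\<integral>\<^sup>+\<omega>. Y \<omega> * S T \<omega> 1 j \<partial>Q1) = (\<integral>\<^sup>+\<omega>. Y \<omega> * S t \<omega> 1 j \<partial>Q1)"
proof -
  interpret sigma_finite_subalgebra Q1 "F t" using sfsub[OF t] .
  have ae: "AE \<omega> in Q1. S t \<omega> 1 j = nn_cond_exp Q1 (F t) (\<lambda>\<omega>. S T \<omega> 1 j) \<omega>"
    apply (rule nn_cond_exp_charact)
    using mart_A[OF j t] meas_SQ[OF one_in j T_in] meas_S[OF one_in j t] by auto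
  have "(\<integral>\<^sup>+\<omega>. Y \<omega> * S T \<omega> 1 j \<partial>Q1) = (\<integral>\<^sup>+\<omega>. Y \<omega> * nn_cond_exp Q1 (F t) (\<lambda>\<omega>. S T \<omega> 1 j) \<omega> \<partial>Q1)"
    by (rule nn_cond_exp_intg[symmetric]) (rule Y, rule meas_SQ[OF one_in j T_in])
  also have "\<dots> = (\<integral>\<^sup>+\<omega>. Y \<omega> * S t \<omega> 1 j \<partial>Q1)"
    by (rule nn_integral_cong_AE) (use ae in auto)
  finally show ?thesis .
qed

end



context setting begin

definition "D i \<omega> = s i 1 * S T \<omega> 1 i"

lemma s_facts: assumes i: "i \<in> {1..d}"
  shows "s i 1 \<noteq> \<infinity>" "s 1 i \<noteq> \<infinity>" "s i 1 * s 1 i = 1" "s i 1 \<noteq> 0" "s 1 i \<noteq> 0"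
    "(\<Sum>k\<in>{1..d}. s 1 k) = s 1 i * (\<Sum>k\<in>{1..d}. s i k)" "(\<Sum>k\<in>{1..d}. s i k) \<noteq> 0"
  using em_active_facts[OF em0 i d act0[OF i] fin0[OF i]] fin0[OF i] by auto

lemma s_fin: assumes i: "i \<in> {1..d}" and j: "j \<in> {1..d}" shows "s i j \<noteq> \<infinity>"
proof -
  have "s i j \<le> (\<Sum>k\<in>{1..d}. s i k)" by (rule sum_row_ge[OF j])
  then have "s i j < \<infinity>" using act0[OF i] by (rule le_less_trans)
  then show ?thesis by simp
qed

lemma s_nz: "i \<in> {1..d} \<Longrightarrow> j \<in> {1..d} \<Longrightarrow> s i j \<noteq> 0"
  using em_pos[OF em0] s_fin by blast

lemma Qi: "i \<in> {1..d} \<Longrightarrow> Q i = density Q1 (D i)"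
  using Q_def unfolding D_def s_def by auto

lemma measD[measurable]: "i \<in> {1..d} \<Longrightarrow> D i \<in> borel_measurable Q1"
  unfolding D_def using meas_SQ[OF one_in _ T_in] by measurable

lemma space_Qi: "i \<in> {1..d} \<Longrightarrow> space (Q i) = \<Omega>" and sets_Qi: "i \<in> {1..d} \<Longrightarrow> sets (Q i) = sets Q1"
  using Qi by auto

lemma prob_Qi: assumes i: "i \<in> {1..d}" shows "prob_space (Q i)"
proof
  have "emeasure (Q i) (space (Q i)) = (\<integral>\<^sup>+\<omega>. D i \<omega> * indicator \<Omega> \<omega> \<partial>Q1)"
    using Qi[OF i] by (simp add: emeasure_density measD[OF i])
  also have "\<dots> = (\<integral>\<^sup>+\<omega>. s i 1 * S T \<omega> 1 i \<partial>Q1)"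
    by (rule nn_integral_cong) (simp add: D_def)
  also have "\<dots> = (\<integral>\<^sup>+\<omega>. s i 1 * S 0 \<omega> 1 i \<partial>Q1)"
    by (rule mart_Y[OF i z_in]) simp
  also have "\<dots> = (\<integral>\<^sup>+\<omega>. s i 1 * s 1 i \<partial>Q1)"
    by (rule nn_integral_cong, subst S0_const[OF _ one_in i], auto)
  also have "\<dots> = 1" using s_facts(3)[OF i] prob_space.emeasure_space_1[OF Q1] by simp
  finally show "emeasure (Q i) (space (Q i)) = 1" .
qed

lemma nc:
  assumes i: "i \<in> {1..d}" and j: "j \<in> {1..d}" and t: "t \<in> {0..T}" and A: "A \<in> sets (F t)"
  shows "(\<integral>\<^sup>+\<omega>. S t \<omega> i j * indicator A \<omega> \<partial>Q i)
          = s i j * emeasure (Q j) (A \<inter> {\<omega>\<in>\<Omega>. 0 < S t \<omega> j i})"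
proof -
  define B where "B = {\<omega>\<in>\<Omega>. 0 < S t \<omega> j i}"
  have AQ: "A \<in> sets Q1" using A setsF[OF t] by auto
  have [measurable]: "(\<lambda>\<omega>. S t \<omega> j i) \<in> borel_measurable (F t)" by (rule meas_S[OF j i t])
  have "{\<omega>\<in>space (F t). 0 < S t \<omega> j i} \<in> sets (F t)" by measurable
  then have B: "B \<in> sets (F t)" unfolding B_def using spaceF[OF t] by simp
  have AB: "A \<inter> B \<in> sets (F t)" using A B by auto
  have ABQ: "A \<inter> B \<in> sets Q1" using AB setsF[OF t] by auto
  have [measurable]: "(\<lambda>\<omega>. S t \<omega> i j) \<in> borel_measurable (F t)" by (rule meas_S[OF i j t])
  have [measurable]: "A \<in> sets (F t)" "A \<inter> B \<in> sets (F t)" using A AB by auto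
  have mij: "(\<lambda>\<omega>. S t \<omega> i j) \<in> borel_measurable Q1" by (rule meas_SQ[OF i j t])
  have "(\<integral>\<^sup>+\<omega>. S t \<omega> i j * indicator A \<omega> \<partial>Q i) = (\<integral>\<^sup>+\<omega>. D i \<omega> * (S t \<omega> i j * indicator A \<omega>) \<partial>Q1)"
    unfolding Qi[OF i] by (rule nn_integral_density) (use measD[OF i] mij AQ in auto)
  also have "\<dots> = (\<integral>\<^sup>+\<omega>. (s i 1 * (S t \<omega> i j * indicator A \<omega>)) * S T \<omega> 1 i \<partial>Q1)"
    unfolding D_def by (simp add: mult_ac)
  also have "\<dots> = (\<integral>\<^sup>+\<omega>. (s i 1 * (S t \<omega> i j * indicator A \<omega>)) * S t \<omega> 1 i \<partial>Q1)"
    by (rule mart_Y[OF i t]) measurable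
  also have "\<dots> = (\<integral>\<^sup>+\<omega>. s i 1 * (indicator (A \<inter> B) \<omega> * S t \<omega> 1 j) \<partial>Q1)"
  proof (rule nn_integral_cong)
    fix \<omega> assume w: "\<omega> \<in> space Q1"
    have e: "S t \<omega> i j * S t \<omega> 1 i = (if 0 < S t \<omega> j i then S t \<omega> 1 j else 0)"
      by (rule em_E1[OF em[OF t w] i j d fin1[OF i t w] fin1[OF j t w]])
    have "(s i 1 * (S t \<omega> i j * indicator A \<omega>)) * S t \<omega> 1 i = s i 1 * indicator A \<omega> * (S t \<omega> i j * S t \<omega> 1 i)"
      by (simp add: mult_ac)
    also have "\<dots> = s i 1 * (indicator (A \<inter> B) \<omega> * S t \<omega> 1 j)"
      unfolding e using w by (auto simp: B_def split: split_indicator)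
    finally show "(s i 1 * (S t \<omega> i j * indicator A \<omega>)) * S t \<omega> 1 i = s i 1 * (indicator (A \<inter> B) \<omega> * S t \<omega> 1 j)" .
  qed
  also have "\<dots> = s i 1 * (\<integral>\<^sup>+\<omega>. indicator (A \<inter> B) \<omega> * S t \<omega> 1 j \<partial>Q1)"
    by (rule nn_integral_cmult) (use ABQ meas_SQ[OF one_in j t] in measurable)
  also have "\<dots> = s i j * emeasure (Q j) (A \<inter> B)"
  proof -
    have "emeasure (Q j) (A \<inter> B) = (\<integral>\<^sup>+\<omega>. D j \<omega> * indicator (A \<inter> B) \<omega> \<partial>Q1)"
      unfolding Qi[OF j] by (rule emeasure_density[OF measD[OF j] ABQ])
    also have "\<dots> = (\<integral>\<^sup>+\<omega>. (s j 1 * indicator (A \<inter> B) \<omega>) * S T \<omega> 1 j \<partial>Q1)"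
      unfolding D_def by (simp add: mult_ac)
    also have "\<dots> = (\<integral>\<^sup>+\<omega>. (s j 1 * indicator (A \<inter> B) \<omega>) * S t \<omega> 1 j \<partial>Q1)"
      by (rule mart_Y[OF j t]) measurable
    also have "\<dots> = s j 1 * (\<integral>\<^sup>+\<omega>. indicator (A \<inter> B) \<omega> * S t \<omega> 1 j \<partial>Q1)"
      by (subst nn_integral_cmult[symmetric]) (use ABQ meas_SQ[OF one_in j t] in \<open>auto simp: mult_ac\<close>)
    finally have "s i j * emeasure (Q j) (A \<inter> B) = (s i j * s j 1) * (\<integral>\<^sup>+\<omega>. indicator (A \<inter> B) \<omega> * S t \<omega> 1 j \<partial>Q1)"
      by (simp add: mult_ac)
    moreover have "s i j * s j 1 = s i 1"
      by (rule em_mult[OF em0 i j one_in s_nz[OF i j] s_fin[OF i j]])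
    ultimately show ?thesis by simp
  qed
  finally show ?thesis unfolding B_def .
qed

lemma numcons: "numeraire_consistent d \<Omega> F T S Q"
  unfolding numeraire_consistent_def s_def[symmetric] using nc by blast

lemma ac: "i \<in> {1..d} \<Longrightarrow> absolutely_continuous Q1 (Q i)"
  using Qi absolutely_continuousI_density measD by metis

end



context setting begin

lemma ws: "weighted_sum_measure \<Omega> (sets (F T)) {1..d} w Q = density Q1 (\<lambda>\<omega>. \<Sum>i\<in>{1..d}. w i * D i \<omega>)"
  (is "_ = density Q1 ?g")
proof -
  have mg: "?g \<in> borel_measurable Q1" using measD by measurable
  have "density Q1 ?g = measure_of \<Omega> (sets (F T)) (emeasure (density Q1 ?g))"
    using measure_of_of_measure[of "density Q1 ?g"] sQ1 by simp
  also have "\<dots> = measure_of \<Omega> (sets (F T)) (\<lambda>A. \<Sum>i\<in>{1..d}. w i * emeasure (Q i) A)"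
  proof (rule measure_of_eq)
    show "sets (F T) \<subseteq> Pow \<Omega>" using sets.space_closed[of Q1] sQ1 by simp
    fix a assume "a \<in> sigma_sets \<Omega> (sets (F T))"
    then have a: "a \<in> sets Q1" using sets.sigma_sets_eq[of Q1] sQ1 by simp
    have "emeasure (density Q1 ?g) a = (\<integral>\<^sup>+\<omega>. ?g \<omega> * indicator a \<omega> \<partial>Q1)"
      by (rule emeasure_density[OF mg a])
    also have "\<dots> = (\<integral>\<^sup>+\<omega>. (\<Sum>i\<in>{1..d}. w i * (D i \<omega> * indicator a \<omega>)) \<partial>Q1)"
      by (rule nn_integral_cong) (simp add: sum_distrib_right mult.assoc)
    also have "\<dots> = (\<Sum>i\<in>{1..d}. (\<integral>\<^sup>+\<omega>. w i * (D i \<omega> * indicator a \<omega>) \<partial>Q1))"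
      by (rule nn_integral_sum) (use a measD in measurable)
    also have "\<dots> = (\<Sum>i\<in>{1..d}. w i * emeasure (Q i) a)"
    proof (rule sum.cong)
      fix i assume i: "i \<in> {1..d}"
      have "(\<integral>\<^sup>+\<omega>. w i * (D i \<omega> * indicator a \<omega>) \<partial>Q1) = w i * (\<integral>\<^sup>+\<omega>. D i \<omega> * indicator a \<omega> \<partial>Q1)"
        by (rule nn_integral_cmult) (use a measD[OF i] in measurable)
      also have "\<dots> = w i * emeasure (Q i) a"
        unfolding Qi[OF i] by (simp add: emeasure_density[OF measD[OF i] a])
      finally show "(\<integral>\<^sup>+\<omega>. w i * (D i \<omega> * indicator a \<omega>) \<partial>Q1) = w i * emeasure (Q i) a" .
    qed simp
    finally show "emeasure (density Q1 ?g) a = (\<Sum>i\<in>{1..d}. w i * emeasure (Q i) a)" .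
  qed
  finally show ?thesis unfolding weighted_sum_measure_def by simp
qed

lemma s11: "s 1 1 = 1" using em0 one_in unfolding exchange_matrix_def by auto

lemma ST11: "\<omega> \<in> \<Omega> \<Longrightarrow> t \<in> {0..T} \<Longrightarrow> S t \<omega> 1 1 = 1"
  using em one_in unfolding exchange_matrix_def by auto

lemma eqv: "equivalent_measures (weighted_sum_measure \<Omega> (sets (F T)) {1..d} (\<lambda>_. 1) Q) Q1"
proof -
  define g where "g = (\<lambda>\<omega>. \<Sum>i\<in>{1..d}. 1 * D i \<omega>)"
  have mg: "g \<in> borel_measurable Q1" unfolding g_def using measD by measurable
  have g1: "1 \<le> g \<omega>" if "\<omega> \<in> \<Omega>" for \<omega>
  proof -
    have "D 1 \<omega> \<le> g \<omega>" unfolding g_def by (simp, rule member_le_sum) (use one_in in auto)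
    moreover have "D 1 \<omega> = 1" unfolding D_def using s11 ST11[OF that T_in] by simp
    ultimately show ?thesis by simp
  qed
  have W: "weighted_sum_measure \<Omega> (sets (F T)) {1..d} (\<lambda>_. 1) Q = density Q1 g"
    unfolding g_def by (rule ws)
  have "absolutely_continuous (density Q1 g) Q1"
    unfolding absolutely_continuous_def
  proof
    fix N assume "N \<in> null_sets (density Q1 g)"
    then have N: "N \<in> sets Q1" and ae: "AE x in Q1. x \<in> N \<longrightarrow> g x = 0"
      using null_sets_density_iff[OF mg] by auto
    have "AE x in Q1. x \<notin> N"
      using ae by eventually_elim (use g1 sets.sets_into_space[OF N] in fastforce)
    then show "N \<in> null_sets Q1" using AE_iff_null_sets[OF N] by simp
  qed
  moreover have "absolutely_continuous Q1 (density Q1 g)" by (rule absolutely_continuousI_density[OF mg])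
  ultimately show ?thesis unfolding equivalent_measures_def W by simp
qed

definition "\<sigma> t \<omega> = (\<Sum>k\<in>{1..d}. S t \<omega> 1 k)"
definition "b1 = 1 / (\<Sum>k\<in>{1..d}. s 1 k)"

lemma sig_meas: "t \<in> {0..T} \<Longrightarrow> \<sigma> t \<in> borel_measurable (F t)"
  unfolding \<sigma>_def using meas_S[OF one_in _ ] by measurable

lemma sig_measQ: "t \<in> {0..T} \<Longrightarrow> \<sigma> t \<in> borel_measurable Q1"
  using sig_meas measF by blast

lemma sig_fin: "\<omega> \<in> \<Omega> \<Longrightarrow> t \<in> {0..T} \<Longrightarrow> \<sigma> t \<omega> \<noteq> \<infinity>"
  unfolding \<sigma>_def using fin1 by (simp add: top.not_eq_extremum)

lemma sig_ge1: "\<omega> \<in> \<Omega> \<Longrightarrow> t \<in> {0..T} \<Longrightarrow> 1 \<le> \<sigma> t \<omega>"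
  unfolding \<sigma>_def using sum_row_ge[OF one_in, of "S t \<omega>" 1] ST11 by simp

lemma sig_nz: "\<omega> \<in> \<Omega> \<Longrightarrow> t \<in> {0..T} \<Longrightarrow> \<sigma> t \<omega> \<noteq> 0"
  using sig_ge1 by (metis not_one_le_zero)

lemma sig0: "\<omega> \<in> \<Omega> \<Longrightarrow> \<sigma> 0 \<omega> = (\<Sum>k\<in>{1..d}. s 1 k)"
  unfolding \<sigma>_def using S0_const[OF _ one_in] by (intro sum.cong) auto

lemma b1_facts: "b1 \<noteq> 0" "b1 \<noteq> \<infinity>" "b1 * (\<Sum>k\<in>{1..d}. s 1 k) = 1"
proof -
  have a: "(\<Sum>k\<in>{1..d}. s 1 k) \<noteq> 0" "(\<Sum>k\<in>{1..d}. s 1 k) \<noteq> \<infinity>"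
    using sig0[OF \<omega>0_in] sig_nz[OF \<omega>0_in z_in] sig_fin[OF \<omega>0_in z_in] by auto
  then show "b1 \<noteq> 0" "b1 \<noteq> \<infinity>" unfolding b1_def by (auto simp: divide_ennreal_def)
  show "b1 * (\<Sum>k\<in>{1..d}. s 1 k) = 1" unfolding b1_def using ennreal_inv_mult_cancel[OF a]
    by (simp add: divide_ennreal_def)
qed

lemma mart_sig:
  assumes t: "t \<in> {0..T}" and Y: "Y \<in> borel_measurable (F t)"
  shows "(\<integral>\<^sup>+\<omega>. Y \<omega> * \<sigma> T \<omega> \<partial>Q1) = (\<integral>\<^sup>+\<omega>. Y \<omega> * \<sigma> t \<omega> \<partial>Q1)"
proof -
  have YQ: "Y \<in> borel_measurable Q1" using measF[OF t Y] .
  have "(\<integral>\<^sup>+\<omega>. Y \<omega> * \<sigma> u \<omega> \<partial>Q1) = (\<Sum>k\<in>{1..d}. \<integral>\<^sup>+\<omega>. Y \<omega> * S u \<omega> 1 k \<partial>Q1)"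
    if u: "u \<in> {0..T}" for u
    unfolding \<sigma>_def sum_distrib_left
    by (rule nn_integral_sum) (use YQ meas_SQ[OF one_in _ u] in measurable)
  then show ?thesis using mart_Y[OF _ t Y] T_in t by simp
qed

lemma Qbar_eq: "weighted_sum_measure \<Omega> (sets (F T)) {1..d} (\<lambda>i. basket d S 0 \<omega>0 i) Q
    = density Q1 (\<lambda>\<omega>. b1 * \<sigma> T \<omega>)"
proof -
  have w: "basket d S 0 \<omega>0 i * s i 1 = b1" if i: "i \<in> {1..d}" for i
  proof -
    define \<tau> where "\<tau> = (\<Sum>k\<in>{1..d}. s i k)"
    have bi: "basket d S 0 \<omega>0 i = inverse \<tau>"
      unfolding basket_def \<tau>_def divide_ennreal_def using S0_const[OF \<omega>0_in i] by simp
    have si: "s i 1 = inverse (s 1 i)"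
      using s_facts(3)[OF i] ennreal_mult_one_inv[of "s 1 i" "s i 1"] by (simp add: mult.commute)
    have tf: "\<tau> < top" using act0[OF i] unfolding \<tau>_def by simp
    have sf: "s 1 i < top" using s_facts(2)[OF i] by (simp add: top.not_eq_extremum)
    have "b1 = inverse (s 1 i * \<tau>)" unfolding b1_def s_facts(6)[OF i] \<tau>_def divide_ennreal_def by simp
    also have "\<dots> = inverse (s 1 i) * inverse \<tau>" using ennreal_inverse_mult[OF sf tf] .
    finally show ?thesis unfolding bi si by (simp add: mult.commute)
  qed
  show ?thesis unfolding ws
  proof (rule density_cong)
    show "(\<lambda>\<omega>. \<Sum>i\<in>{1..d}. basket d S 0 \<omega>0 i * D i \<omega>) \<in> borel_measurable Q1" using measD by measurable
    show "(\<lambda>\<omega>. b1 * \<sigma> T \<omega>) \<in> borel_measurable Q1" using sig_measQ[OF T_in] by measurable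
    have "(\<Sum>i\<in>{1..d}. basket d S 0 \<omega>0 i * D i \<omega>) = b1 * \<sigma> T \<omega>" for \<omega>
      unfolding D_def \<sigma>_def sum_distrib_left
      by (rule sum.cong) (use w in \<open>auto simp: mult.assoc[symmetric]\<close>)
    then show "AE x in Q1. (\<Sum>i\<in>{1..d}. basket d S 0 \<omega>0 i * D i x) = b1 * \<sigma> T x" by simp
  qed
qed

definition "Qb = density Q1 (\<lambda>\<omega>. b1 * \<sigma> T \<omega>)"

lemma prob_Qb: "prob_space Qb"
proof
  have sp: "space Qb = \<Omega>" unfolding Qb_def by simp
  have "emeasure Qb (space Qb) = (\<integral>\<^sup>+\<omega>. (b1 * \<sigma> T \<omega>) * indicator \<Omega> \<omega> \<partial>Q1)"
    unfolding sp unfolding Qb_def by (rule emeasure_density) (use sig_measQ[OF T_in] in auto)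
  also have "\<dots> = b1 * (\<integral>\<^sup>+\<omega>. 1 * \<sigma> T \<omega> \<partial>Q1)"
    by (subst nn_integral_cmult[symmetric]) (auto intro!: nn_integral_cong simp: sig_measQ[OF T_in])
  also have "\<dots> = b1 * (\<integral>\<^sup>+\<omega>. 1 * \<sigma> 0 \<omega> \<partial>Q1)"
    using mart_sig[OF z_in, of "\<lambda>_. 1"] by simp
  also have "\<dots> = b1 * (\<integral>\<^sup>+\<omega>. (\<Sum>k\<in>{1..d}. s 1 k) \<partial>Q1)"
    by (simp add: sig0 cong: nn_integral_cong)
  also have "\<dots> = 1" using b1_facts(3) prob_space.emeasure_space_1[OF Q1] by simp
  finally show "emeasure Qb (space Qb) = 1" .
qed

end



lemma div_cancel: "(a::ennreal) \<noteq> 0 \<Longrightarrow> a \<noteq> \<infinity> \<Longrightarrow> 1 / a * a = 1"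
  using ennreal_inv_mult_cancel by (simp add: divide_ennreal_def)

context setting begin

lemma claim_meas: "C \<in> claims d \<Omega> F T S \<Longrightarrow> i \<in> {1..d} \<Longrightarrow> (\<lambda>\<omega>. C \<omega> i) \<in> borel_measurable Q1"
  unfolding claims_def using measurable_cong_sets[OF sQ1 refl] by blast

lemma claim_vv: "C \<in> claims d \<Omega> F T S \<Longrightarrow> \<omega> \<in> \<Omega> \<Longrightarrow> value_vector d (S T \<omega>) (C \<omega>)"
  unfolding claims_def by blast

lemma basket1: "basket d S t \<omega> 1 = 1 / \<sigma> t \<omega>"
  unfolding basket_def \<sigma>_def ..

lemma bc_eq: assumes C: "C \<in> claims d \<Omega> F T S" and w: "\<omega> \<in> \<Omega>"
  shows "basket_claim d T S C \<omega> = 1 / \<sigma> T \<omega> * C \<omega> 1"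
proof -
  have "basket_claim d T S C \<omega> = basket d S T \<omega> 1 * C \<omega> 1"
    using basket_claim_eq[where S=S and T=T and \<omega>=\<omega> and C=C and d=d] em[OF T_in w] claim_vv[OF C w] d
      fin1[OF _ T_in w] by blast
  then show ?thesis unfolding basket1 .
qed

lemma bc_meas: assumes C: "C \<in> claims d \<Omega> F T S" shows "basket_claim d T S C \<in> borel_measurable Q1"
proof -
  have "(\<lambda>\<omega>. 1 / \<sigma> T \<omega> * C \<omega> 1) \<in> borel_measurable Q1"
    using sig_measQ[OF T_in] claim_meas[OF C one_in] by measurable
  then show ?thesis by (rule measurable_cong[THEN iffD2, rotated]) (simp add: bc_eq[OF C])
qed

lemma sfQb: "r \<in> {0..T} \<Longrightarrow> sigma_finite_subalgebra Qb (F r)"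
proof -
  assume r: "r \<in> {0..T}"
  have "finite_measure_subalgebra Qb (F r)"
    unfolding finite_measure_subalgebra_def finite_measure_subalgebra_axioms_def subalgebra_def
    using prob_Qb prob_space.axioms(1) spaceF[OF r] setsF[OF r] unfolding Qb_def by auto
  then show ?thesis using finite_measure_subalgebra_is_sigma_finite by blast
qed

lemma AE_Qb: "(AE \<omega> in Qb. P \<omega>) \<Longrightarrow> (AE \<omega> in Q1. P \<omega>)"
proof -
  assume "AE \<omega> in Qb. P \<omega>"
  then have "AE \<omega> in Q1. 0 < b1 * \<sigma> T \<omega> \<longrightarrow> P \<omega>"
    unfolding Qb_def using AE_density[of "\<lambda>\<omega>. b1 * \<sigma> T \<omega>" Q1] sig_measQ[OF T_in] by auto
  then show ?thesis
  proof (rule AE_mp[OF _ AE_I2], intro impI)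
    fix \<omega> assume w: "\<omega> \<in> \<Omega>" and h: "0 < b1 * \<sigma> T \<omega> \<longrightarrow> P \<omega>"
    have "0 < b1 * \<sigma> T \<omega>" using b1_facts(1) sig_nz[OF w T_in]
      by (simp add: zero_less_iff_neq_zero)
    then show "P \<omega>" using h by simp
  qed
qed

lemma C1:
  assumes r: "r \<in> {0..T}" and C: "C \<in> claims d \<Omega> F T S"
  shows "AE \<omega> in Q1. nn_cond_exp Qb (F r) (basket_claim d T S C) \<omega>
                        = basket d S r \<omega> 1 * nn_cond_exp Q1 (F r) (\<lambda>\<omega>. C \<omega> 1) \<omega>"
proof -
  interpret Q1s: sigma_finite_subalgebra Q1 "F r" using sfsub[OF r] .
  interpret Qbs: sigma_finite_subalgebra Qb "F r" using sfQb[OF r] .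
  define N1 where "N1 = nn_cond_exp Q1 (F r) (\<lambda>\<omega>. C \<omega> 1)"
  define g where "g = (\<lambda>\<omega>. 1 / \<sigma> r \<omega> * N1 \<omega>)"
  have [measurable]: "N1 \<in> borel_measurable (F r)" unfolding N1_def by simp
  have [measurable]: "\<sigma> r \<in> borel_measurable (F r)" by (rule sig_meas[OF r])
  have gm[measurable]: "g \<in> borel_measurable (F r)" unfolding g_def by measurable
  have gmQ: "g \<in> borel_measurable Q1" using measF[OF r gm] .
  have c1m: "(\<lambda>\<omega>. C \<omega> 1) \<in> borel_measurable Q1" by (rule claim_meas[OF C one_in])
  have sTm: "\<sigma> T \<in> borel_measurable Q1" by (rule sig_measQ[OF T_in])
  have srm: "\<sigma> r \<in> borel_measurable Q1" by (rule sig_measQ[OF r])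
  have bcm: "basket_claim d T S C \<in> borel_measurable Q1" by (rule bc_meas[OF C])
  have "AE \<omega> in Qb. g \<omega> = nn_cond_exp Qb (F r) (basket_claim d T S C) \<omega>"
  proof (rule Qbs.nn_cond_exp_charact)
    show "basket_claim d T S C \<in> borel_measurable Qb" using bcm unfolding Qb_def by simp
    show "g \<in> borel_measurable (F r)" by (rule gm)
    fix A assume A: "A \<in> sets (F r)"
    have AQ: "A \<in> sets Q1" using A setsF[OF r] by auto
    have [measurable]: "A \<in> sets (F r)" by (rule A)
    have "(\<integral>\<^sup>+x\<in>A. basket_claim d T S C x \<partial>Qb) = (\<integral>\<^sup>+x. (b1 * \<sigma> T x) * (basket_claim d T S C x * indicator A x) \<partial>Q1)"
      unfolding Qb_def by (rule nn_integral_density) (use sTm bcm AQ in measurable)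
    also have "\<dots> = (\<integral>\<^sup>+x. b1 * (C x 1 * indicator A x) \<partial>Q1)"
    proof (rule nn_integral_cong)
      fix x assume x: "x \<in> space Q1"
      have "(b1 * \<sigma> T x) * (basket_claim d T S C x * indicator A x) = b1 * (1 / \<sigma> T x * \<sigma> T x) * (C x 1 * indicator A x)"
        using bc_eq[OF C x] by (simp add: mult_ac)
      then show "(b1 * \<sigma> T x) * (basket_claim d T S C x * indicator A x) = b1 * (C x 1 * indicator A x)"
        using div_cancel[OF sig_nz[OF x T_in] sig_fin[OF x T_in]] by simp
    qed
    also have "\<dots> = b1 * (\<integral>\<^sup>+x. indicator A x * C x 1 \<partial>Q1)"
      by (subst nn_integral_cmult[symmetric]) (use c1m AQ in \<open>auto simp: mult_ac\<close>)
    also have "\<dots> = b1 * (\<integral>\<^sup>+x. indicator A x * N1 x \<partial>Q1)"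
      unfolding N1_def by (subst Q1s.nn_cond_exp_intg) (use c1m in auto)
    also have "\<dots> = (\<integral>\<^sup>+x. (b1 * (g x * indicator A x)) * \<sigma> r x \<partial>Q1)"
    proof -
      have "(\<integral>\<^sup>+x. (b1 * (g x * indicator A x)) * \<sigma> r x \<partial>Q1) = (\<integral>\<^sup>+x. b1 * (indicator A x * N1 x) \<partial>Q1)"
      proof (rule nn_integral_cong)
        fix x assume x: "x \<in> space Q1"
        have "(b1 * (g x * indicator A x)) * \<sigma> r x = b1 * (1 / \<sigma> r x * \<sigma> r x) * (indicator A x * N1 x)"
          unfolding g_def by (simp add: mult_ac)
        then show "(b1 * (g x * indicator A x)) * \<sigma> r x = b1 * (indicator A x * N1 x)"
          using div_cancel[OF sig_nz[OF x r] sig_fin[OF x r]] by simp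
      qed
      also have "\<dots> = b1 * (\<integral>\<^sup>+x. indicator A x * N1 x \<partial>Q1)"
        by (rule nn_integral_cmult, rule measF[OF r]) measurable
      finally show ?thesis by simp
    qed
    also have "\<dots> = (\<integral>\<^sup>+x. (b1 * (g x * indicator A x)) * \<sigma> T x \<partial>Q1)"
      by (rule mart_sig[OF r, symmetric]) measurable
    also have "\<dots> = (\<integral>\<^sup>+x. (b1 * \<sigma> T x) * (g x * indicator A x) \<partial>Q1)"
      by (simp add: mult_ac)
    also have "\<dots> = (\<integral>\<^sup>+x\<in>A. g x \<partial>Qb)"
      unfolding Qb_def by (rule nn_integral_density[symmetric]) (use sTm gmQ AQ in measurable)
    finally show "(\<integral>\<^sup>+x\<in>A. basket_claim d T S C x \<partial>Qb) = (\<integral>\<^sup>+x\<in>A. g x \<partial>Qb)" .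
  qed
  then have "AE \<omega> in Q1. g \<omega> = nn_cond_exp Qb (F r) (basket_claim d T S C) \<omega>" by (rule AE_Qb)
  then show ?thesis by eventually_elim (unfold g_def N1_def basket1, simp)
qed

end



context setting begin

lemma inactive:
  assumes w: "\<omega> \<in> \<Omega>" and r: "r \<in> {0..T}" and i: "i \<in> {1..d}" and na: "i \<notin> active d S r \<omega>"
  shows "S r \<omega> 1 i = 0"
proof (rule ccontr)
  assume nz: "S r \<omega> 1 i \<noteq> 0"
  have "\<sigma> r \<omega> = S r \<omega> 1 i * (\<Sum>k\<in>{1..d}. S r \<omega> i k)"
    unfolding \<sigma>_def by (rule em_rowsum[OF em[OF r w] one_in i nz fin1[OF i r w]])
  then have "(\<Sum>k\<in>{1..d}. S r \<omega> i k) \<noteq> \<infinity>" using sig_fin[OF w r] nz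
    by (auto simp: ennreal_mult_eq_top_iff)
  then have "i \<in> active d S r \<omega>" using i unfolding active_def by (simp add: top.not_eq_extremum)
  then show False using na by simp
qed

lemma act_facts:
  assumes w: "\<omega> \<in> \<Omega>" and r: "r \<in> {0..T}" and a: "i \<in> active d S r \<omega>"
  shows "i \<in> {1..d}" "(\<Sum>k\<in>{1..d}. S r \<omega> i k) < \<infinity>" "S r \<omega> 1 i \<noteq> 0" "S r \<omega> i 1 * S r \<omega> 1 i = 1"
proof -
  show i: "i \<in> {1..d}" and t: "(\<Sum>k\<in>{1..d}. S r \<omega> i k) < \<infinity>" using a unfolding active_def by auto
  note f = em_active_facts[OF em[OF r w] i d t fin1[OF i r w]]
  show "S r \<omega> 1 i \<noteq> 0" "S r \<omega> i 1 * S r \<omega> 1 i = 1" using f by auto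
qed

lemma E_meas: assumes r: "r \<in> {0..T}" and i: "i \<in> {1..d}"
  shows "{\<omega>\<in>\<Omega>. i \<in> active d S r \<omega>} \<in> sets (F r)"
proof -
  have [measurable]: "(\<lambda>\<omega>. S r \<omega> i k) \<in> borel_measurable (F r)" if "k \<in> {1..d}" for k
    using meas_S[OF i that r] .
  have "{\<omega>\<in>space (F r). (\<Sum>k\<in>{1..d}. S r \<omega> i k) < \<infinity>} \<in> sets (F r)" by measurable
  moreover have "{\<omega>\<in>\<Omega>. i \<in> active d S r \<omega>} = {\<omega>\<in>space (F r). (\<Sum>k\<in>{1..d}. S r \<omega> i k) < \<infinity>}"
    using i spaceF[OF r] unfolding active_def by auto
  ultimately show ?thesis by simp
qed

lemma C2a:
  assumes r: "r \<in> {0..T}" and C: "C \<in> claims d \<Omega> F T S" and i: "i \<in> {1..d}"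
  shows "AE \<omega> in Q1. i \<in> active d S r \<omega> \<longrightarrow> nn_cond_exp (Q i) (F r) (\<lambda>\<omega>. C \<omega> i) \<omega>
      = S r \<omega> i 1 * nn_cond_exp Q1 (F r) (\<lambda>\<omega>. C \<omega> 1 * indicator (\<Omega> - {\<omega>\<in>\<Omega>. S T \<omega> 1 i = 0}) \<omega>) \<omega>"
proof -
  interpret Q1s: sigma_finite_subalgebra Q1 "F r" using sfsub[OF r] .
  have "finite_measure_subalgebra (Q i) (F r)"
    unfolding finite_measure_subalgebra_def finite_measure_subalgebra_axioms_def subalgebra_def
    using prob_Qi[OF i] prob_space.axioms(1) spaceF[OF r] setsF[OF r] space_Qi[OF i] sets_Qi[OF i] by auto
  then interpret Qis: sigma_finite_subalgebra "Q i" "F r" using finite_measure_subalgebra_is_sigma_finite by blast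
  define Z where "Z = {\<omega>\<in>\<Omega>. S T \<omega> 1 i = 0}"
  define h where "h = (\<lambda>\<omega>. C \<omega> 1 * indicator (\<Omega> - Z) \<omega>)"
  define Nh where "Nh = nn_cond_exp Q1 (F r) h"
  define E where "E = {\<omega>\<in>\<Omega>. i \<in> active d S r \<omega>}"
  define g where "g = (\<lambda>\<omega>. indicator E \<omega> * S r \<omega> i 1 * Nh \<omega>)"
  define Ni where "Ni = nn_cond_exp (Q i) (F r) (\<lambda>\<omega>. C \<omega> i)"
  have [measurable]: "(\<lambda>\<omega>. S T \<omega> 1 i) \<in> borel_measurable Q1" by (rule meas_SQ[OF one_in i T_in])
  have [measurable]: "(\<lambda>\<omega>. C \<omega> 1) \<in> borel_measurable Q1" by (rule claim_meas[OF C one_in])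
  have ciQ[measurable]: "(\<lambda>\<omega>. C \<omega> i) \<in> borel_measurable Q1" by (rule claim_meas[OF C i])
  have "{\<omega>\<in>space Q1. S T \<omega> 1 i = 0} \<in> sets Q1" by measurable
  then have ZQ[measurable]: "Z \<in> sets Q1" unfolding Z_def by simp
  have hm[measurable]: "h \<in> borel_measurable Q1" unfolding h_def by measurable
  have Em[measurable]: "E \<in> sets (F r)" unfolding E_def by (rule E_meas[OF r i])
  have [measurable]: "(\<lambda>\<omega>. S r \<omega> i 1) \<in> borel_measurable (F r)" by (rule meas_S[OF i one_in r])
  have [measurable]: "(\<lambda>\<omega>. S r \<omega> 1 i) \<in> borel_measurable (F r)" by (rule meas_S[OF one_in i r])
  have Nhm[measurable]: "Nh \<in> borel_measurable (F r)" unfolding Nh_def by simp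
  have gm[measurable]: "g \<in> borel_measurable (F r)" unfolding g_def by measurable
  have Nim[measurable]: "Ni \<in> borel_measurable (F r)" unfolding Ni_def by simp
  have key: "(\<integral>\<^sup>+x. indicator A x * Nh x \<partial>Q1) = (\<integral>\<^sup>+x. indicator (A \<inter> E) x * Nh x \<partial>Q1)"
    if A: "A \<in> sets (F r)" for A
  proof -
    have [measurable]: "A \<in> sets (F r)" by (rule A)
    have AE: "A - E \<in> sets (F r)" by measurable
    have AEQ[measurable]: "A - E \<in> sets Q1" "A \<inter> E \<in> sets Q1" "A \<in> sets Q1" using AE A Em setsF[OF r] by auto
    have [measurable]: "Nh \<in> borel_measurable Q1" unfolding Nh_def by simp
    have "(\<integral>\<^sup>+x. indicator (A - E) x * S T x 1 i \<partial>Q1) = (\<integral>\<^sup>+x. indicator (A - E) x * S r x 1 i \<partial>Q1)"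
      by (rule mart_Y[OF i r]) measurable
    also have "\<dots> = (\<integral>\<^sup>+x. 0 \<partial>Q1)"
    proof (rule nn_integral_cong)
      fix x assume x: "x \<in> space Q1"
      show "indicator (A - E) x * S r x 1 i = 0"
      proof (cases "x \<in> A - E")
        case True
        then have "i \<notin> active d S r x" using x unfolding E_def by auto
        then show ?thesis using inactive[OF x r i] by simp
      qed simp
    qed
    finally have "(\<integral>\<^sup>+x. indicator (A - E) x * S T x 1 i \<partial>Q1) = 0" by simp
    then have ae0: "AE x in Q1. indicator (A - E) x * S T x 1 i = 0"
      by (subst nn_integral_0_iff_AE[symmetric]) measurable
    have "(\<integral>\<^sup>+x. indicator (A - E) x * h x \<partial>Q1) = 0"
    proof (subst nn_integral_0_iff_AE)
      show "(\<lambda>x. indicator (A - E) x * h x) \<in> borel_measurable Q1"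
        by measurable
      show "AE x in Q1. indicator (A - E) x * h x = 0"
        using ae0 by eventually_elim (auto simp: h_def Z_def split: split_indicator)
    qed
    then have z: "(\<integral>\<^sup>+x. indicator (A - E) x * Nh x \<partial>Q1) = 0"
      unfolding Nh_def by (subst Q1s.nn_cond_exp_intg) (auto intro: AE)
    have "(\<integral>\<^sup>+x. indicator A x * Nh x \<partial>Q1)
        = (\<integral>\<^sup>+x. indicator (A \<inter> E) x * Nh x + indicator (A - E) x * Nh x \<partial>Q1)"
      by (rule nn_integral_cong) (auto split: split_indicator)
    also have "\<dots> = (\<integral>\<^sup>+x. indicator (A \<inter> E) x * Nh x \<partial>Q1) + (\<integral>\<^sup>+x. indicator (A - E) x * Nh x \<partial>Q1)"
      by (rule nn_integral_add) measurable
    finally show ?thesis using z by simp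
  qed
  have "AE \<omega> in Q i. g \<omega> = Ni \<omega>"
    unfolding Ni_def
  proof (rule Qis.nn_cond_exp_charact)
    show "(\<lambda>\<omega>. C \<omega> i) \<in> borel_measurable (Q i)" using ciQ by (subst measurable_cong_sets[OF sets_Qi[OF i] refl])
    show "g \<in> borel_measurable (F r)" by (rule gm)
    fix A assume A: "A \<in> sets (F r)"
    have AQ[measurable]: "A \<in> sets Q1" using A setsF[OF r] by auto
    have [measurable]: "A \<in> sets (F r)" by (rule A)
    have "(\<integral>\<^sup>+x\<in>A. C x i \<partial>Q i) = (\<integral>\<^sup>+x. D i x * (C x i * indicator A x) \<partial>Q1)"
      unfolding Qi[OF i] by (rule nn_integral_density) (use measD[OF i] in measurable)
    also have "\<dots> = (\<integral>\<^sup>+x. s i 1 * (indicator A x * h x) \<partial>Q1)"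
    proof (rule nn_integral_cong)
      fix x assume x: "x \<in> space Q1"
      have e: "C x i * S T x 1 i = (if S T x 1 i = 0 then 0 else C x 1)"
        by (rule value_E2[OF claim_vv[OF C x] i d fin1[OF i T_in x]])
      have "D i x * (C x i * indicator A x) = s i 1 * indicator A x * (C x i * S T x 1 i)"
        unfolding D_def by (simp add: mult_ac)
      also have "\<dots> = s i 1 * (indicator A x * h x)"
        unfolding e h_def Z_def using x by (auto split: split_indicator)
      finally show "D i x * (C x i * indicator A x) = s i 1 * (indicator A x * h x)" .
    qed
    also have "\<dots> = s i 1 * (\<integral>\<^sup>+x. indicator A x * h x \<partial>Q1)"
      by (rule nn_integral_cmult) measurable
    also have "\<dots> = s i 1 * (\<integral>\<^sup>+x. indicator A x * Nh x \<partial>Q1)"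
      unfolding Nh_def by (subst Q1s.nn_cond_exp_intg) auto
    also have "\<dots> = s i 1 * (\<integral>\<^sup>+x. indicator (A \<inter> E) x * Nh x \<partial>Q1)"
      using key[OF A] by simp
    also have "\<dots> = (\<integral>\<^sup>+x. (s i 1 * (g x * indicator A x)) * S r x 1 i \<partial>Q1)"
    proof -
      have "(\<integral>\<^sup>+x. (s i 1 * (g x * indicator A x)) * S r x 1 i \<partial>Q1)
          = (\<integral>\<^sup>+x. s i 1 * (indicator (A \<inter> E) x * Nh x) \<partial>Q1)"
      proof (rule nn_integral_cong)
        fix x assume x: "x \<in> space Q1"
        show "(s i 1 * (g x * indicator A x)) * S r x 1 i = s i 1 * (indicator (A \<inter> E) x * Nh x)"
        proof (cases "x \<in> E")
          case True
          have one: "S r x i 1 * S r x 1 i = 1" using True act_facts(4)[OF x r] unfolding E_def by auto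
          have "(s i 1 * (g x * indicator A x)) * S r x 1 i = s i 1 * (indicator A x * Nh x) * (S r x i 1 * S r x 1 i)"
            unfolding g_def using True by (simp add: mult_ac)
          then show ?thesis using True one by (simp split: split_indicator)
        qed (simp add: g_def)
      qed
      also have "\<dots> = s i 1 * (\<integral>\<^sup>+x. indicator (A \<inter> E) x * Nh x \<partial>Q1)"
        by (rule nn_integral_cmult, rule measF[OF r]) measurable
      finally show ?thesis by simp
    qed
    also have "\<dots> = (\<integral>\<^sup>+x. (s i 1 * (g x * indicator A x)) * S T x 1 i \<partial>Q1)"
      by (rule mart_Y[OF i r, symmetric]) measurable
    also have "\<dots> = (\<integral>\<^sup>+x. D i x * (g x * indicator A x) \<partial>Q1)"
      unfolding D_def by (simp add: mult_ac)
    also have "\<dots> = (\<integral>\<^sup>+x\<in>A. g x \<partial>Q i)"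
      unfolding Qi[OF i] by (rule nn_integral_density[symmetric]) (use measD[OF i] measF[OF r gm] in measurable)
    finally show "(\<integral>\<^sup>+x\<in>A. C x i \<partial>Q i) = (\<integral>\<^sup>+x\<in>A. g x \<partial>Q i)" .
  qed
  define N where "N = {x\<in>space (F r). g x \<noteq> Ni x}"
  have Nm[measurable]: "N \<in> sets (F r)" unfolding N_def by measurable
  have NQ[measurable]: "N \<in> sets Q1" using Nm setsF[OF r] by auto
  have "N \<in> null_sets (Q i)"
  proof (subst AE_iff_null_sets)
    show "N \<in> sets (Q i)" using NQ sets_Qi[OF i] by simp
    show "AE x in Q i. x \<notin> N" using \<open>AE \<omega> in Q i. g \<omega> = Ni \<omega>\<close> unfolding N_def by eventually_elim auto
  qed
  then have "emeasure (Q i) N = 0" by auto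
  then have "(\<integral>\<^sup>+x. D i x * indicator N x \<partial>Q1) = 0"
    unfolding Qi[OF i] by (simp add: emeasure_density measD[OF i])
  then have "(\<integral>\<^sup>+x. s i 1 * indicator N x * S T x 1 i \<partial>Q1) = 0"
    unfolding D_def by (simp add: mult_ac)
  then have "(\<integral>\<^sup>+x. s i 1 * indicator N x * S r x 1 i \<partial>Q1) = 0"
    using mart_Y[OF i r, of "\<lambda>x. s i 1 * indicator N x"] by simp
  have [measurable]: "(\<lambda>x. S r x 1 i) \<in> borel_measurable Q1" by (rule meas_SQ[OF one_in i r])
  then have "AE x in Q1. s i 1 * indicator N x * S r x 1 i = 0"
    using \<open>(\<integral>\<^sup>+x. s i 1 * indicator N x * S r x 1 i \<partial>Q1) = 0\<close>
    by (subst nn_integral_0_iff_AE[symmetric]) measurable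
  then have "AE x in Q1. x \<in> E \<longrightarrow> g x = Ni x"
  proof (rule AE_mp[OF _ AE_I2], intro impI)
    fix x assume x: "x \<in> \<Omega>" and h0: "s i 1 * indicator N x * S r x 1 i = 0" and xE: "x \<in> E"
    have "S r x 1 i \<noteq> 0" using act_facts(3)[OF x r] xE unfolding E_def by auto
    then have "x \<notin> N" using h0 s_facts(4)[OF i] by (auto split: split_indicator)
    then show "g x = Ni x" using x spaceF[OF r] unfolding N_def by auto
  qed
  then show ?thesis using AE_space
    by eventually_elim (auto simp: E_def g_def Ni_def Nh_def h_def Z_def)
qed

end



context setting begin

lemma C2:
  assumes r: "r \<in> {0..T}" and C: "C \<in> claims d \<Omega> F T S" and i: "i \<in> {1..d}"
  shows "AE \<omega> in Q1. i \<in> active d S r \<omega> \<longrightarrow>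
             nn_cond_exp Qb (F r) (basket_claim d T S C) \<omega> / basket d S r \<omega> i
               = nn_cond_exp (Q i) (F r) (\<lambda>\<omega>. C \<omega> i) \<omega>
                 + S r \<omega> i 1 * nn_cond_exp Q1 (F r)
                     (\<lambda>\<omega>. C \<omega> 1 * indicator {\<omega>\<in>\<Omega>. S T \<omega> 1 i = 0} \<omega>) \<omega>"
proof -
  interpret Q1s: sigma_finite_subalgebra Q1 "F r" using sfsub[OF r] .
  define Z where "Z = {\<omega>\<in>\<Omega>. S T \<omega> 1 i = 0}"
  define h where "h = (\<lambda>\<omega>. C \<omega> 1 * indicator (\<Omega> - Z) \<omega>)"
  define h0 where "h0 = (\<lambda>\<omega>. C \<omega> 1 * indicator Z \<omega>)"
  have [measurable]: "(\<lambda>\<omega>. S T \<omega> 1 i) \<in> borel_measurable Q1" by (rule meas_SQ[OF one_in i T_in])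
  have [measurable]: "(\<lambda>\<omega>. C \<omega> 1) \<in> borel_measurable Q1" by (rule claim_meas[OF C one_in])
  have "{\<omega>\<in>space Q1. S T \<omega> 1 i = 0} \<in> sets Q1" by measurable
  then have ZQ[measurable]: "Z \<in> sets Q1" unfolding Z_def by simp
  have [measurable]: "h \<in> borel_measurable Q1" "h0 \<in> borel_measurable Q1" unfolding h_def h0_def by measurable
  have a1: "AE \<omega> in Q1. nn_cond_exp Qb (F r) (basket_claim d T S C) \<omega>
                        = basket d S r \<omega> 1 * nn_cond_exp Q1 (F r) (\<lambda>\<omega>. C \<omega> 1) \<omega>"
    by (rule C1[OF r C])
  have a2: "AE \<omega> in Q1. i \<in> active d S r \<omega> \<longrightarrow> nn_cond_exp (Q i) (F r) (\<lambda>\<omega>. C \<omega> i) \<omega>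
      = S r \<omega> i 1 * nn_cond_exp Q1 (F r) h \<omega>"
    unfolding h_def Z_def by (rule C2a[OF r C i])
  have a3: "AE \<omega> in Q1. nn_cond_exp Q1 (F r) h \<omega> + nn_cond_exp Q1 (F r) h0 \<omega> = nn_cond_exp Q1 (F r) (\<lambda>x. h x + h0 x) \<omega>"
    by (rule Q1s.nn_cond_exp_sum) measurable
  have a4: "AE \<omega> in Q1. nn_cond_exp Q1 (F r) (\<lambda>x. h x + h0 x) \<omega> = nn_cond_exp Q1 (F r) (\<lambda>\<omega>. C \<omega> 1) \<omega>"
  proof (rule Q1s.nn_cond_exp_cong)
    show "AE x in Q1. h x + h0 x = C x 1"
      using AE_space by eventually_elim (auto simp: h_def h0_def Z_def split: split_indicator)
  qed measurable
  show ?thesis using a1 a2 a3 a4 AE_space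
  proof eventually_elim
    case (elim \<omega>)
    show ?case
    proof
      assume act: "i \<in> active d S r \<omega>"
      note w = elim(5)
      have t: "(\<Sum>k\<in>{1..d}. S r \<omega> i k) < \<infinity>" using act_facts(2)[OF w r act] .
      define N1 where "N1 = nn_cond_exp Q1 (F r) (\<lambda>\<omega>. C \<omega> 1) \<omega>"
      have "nn_cond_exp Qb (F r) (basket_claim d T S C) \<omega> / basket d S r \<omega> i
          = (1 / (\<Sum>k\<in>{1..d}. S r \<omega> 1 k) * N1) / (1 / (\<Sum>k\<in>{1..d}. S r \<omega> i k))"
        using elim(1) unfolding N1_def basket_def by simp
      also have "\<dots> = S r \<omega> i 1 * N1"
        by (rule em_F2[OF em[OF r w] i d t fin1[OF i r w]])
      also have "\<dots> = S r \<omega> i 1 * nn_cond_exp Q1 (F r) h \<omega> + S r \<omega> i 1 * nn_cond_exp Q1 (F r) h0 \<omega>"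
        unfolding N1_def using elim(3,4) by (metis distrib_left)
      also have "\<dots> = nn_cond_exp (Q i) (F r) (\<lambda>\<omega>. C \<omega> i) \<omega> + S r \<omega> i 1 * nn_cond_exp Q1 (F r) h0 \<omega>"
        using elim(2) act by simp
      finally show "nn_cond_exp Qb (F r) (basket_claim d T S C) \<omega> / basket d S r \<omega> i
               = nn_cond_exp (Q i) (F r) (\<lambda>\<omega>. C \<omega> i) \<omega>
                 + S r \<omega> i 1 * nn_cond_exp Q1 (F r)
                     (\<lambda>\<omega>. C \<omega> 1 * indicator {\<omega>\<in>\<Omega>. S T \<omega> 1 i = 0} \<omega>) \<omega>"
        unfolding h0_def Z_def .
    qed
  qed
qed

end

theorem mainTheorem8:
  fixes d :: nat and T :: real
    and F :: "real \<Rightarrow> 'a measure"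
    and S :: "real \<Rightarrow> 'a \<Rightarrow> nat \<Rightarrow> nat \<Rightarrow> ennreal"
    and Q1 :: "'a measure"
    and Q :: "nat \<Rightarrow> 'a measure"
    and Qbar :: "'a measure"
  assumes d: "1 \<le> d"
    and filt: "filtered_space (space Q1) F T"
    and proc: "exchange_process d (space Q1) F T S"
    and Q1: "prob_space Q1" "sets Q1 = sets (F T)"
    and mart: "\<forall>j\<in>{1..d}. (\<forall>t\<in>{0..T}. \<forall>\<omega>\<in>space Q1. S t \<omega> 1 j < \<infinity>) \<and>
                  martingale Q1 F T (\<lambda>t \<omega>. enn2real (S t \<omega> 1 j))"
    and Q_def: "\<forall>i\<in>{1..d}. Q i = density Q1 (\<lambda>\<omega>. initial (space Q1) S i 1 * S T \<omega> 1 i)"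
    and Qbar_def: "Qbar = weighted_sum_measure (space Q1) (sets (F T)) {1..d}
                      (\<lambda>i. basket d S 0 (SOME \<omega>. \<omega> \<in> space Q1) i) Q"
  shows "(\<forall>i\<in>{1..d}. prob_space (Q i))
    \<and> numeraire_consistent d (space Q1) F T S Q
    \<and> (\<forall>i\<in>{1..d}. absolutely_continuous Q1 (Q i))
    \<and> equivalent_measures (weighted_sum_measure (space Q1) (sets (F T)) {1..d} (\<lambda>_. 1) Q) Q1
    \<and> (\<forall>r\<in>{0..T}. \<forall>C\<in>claims d (space Q1) F T S.
         (\<integral>\<^sup>+\<omega>. basket_claim d T S C \<omega> \<partial>Qbar) < \<infinity> \<longrightarrow>
         (AE \<omega> in Q1. nn_cond_exp Qbar (F r) (basket_claim d T S C) \<omega>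
                        = basket d S r \<omega> 1 * nn_cond_exp Q1 (F r) (\<lambda>\<omega>. C \<omega> 1) \<omega>)
       \<and> (\<forall>i\<in>{1..d}. AE \<omega> in Q1. i \<in> active d S r \<omega> \<longrightarrow>
             nn_cond_exp Qbar (F r) (basket_claim d T S C) \<omega> / basket d S r \<omega> i
               = nn_cond_exp (Q i) (F r) (\<lambda>\<omega>. C \<omega> i) \<omega>
                 + S r \<omega> i 1 * nn_cond_exp Q1 (F r)
                     (\<lambda>\<omega>. C \<omega> 1 * indicator {\<omega>\<in>space Q1. S T \<omega> 1 i = 0} \<omega>) \<omega>))"
proof -
  interpret setting d T F S Q1 Q
    by (rule setting.intro) (fact d filt proc Q1(1) Q1(2) mart Q_def)+
  have Qb: "Qbar = Qb" unfolding Qbar_def Qb_def \<omega>0_def[symmetric] by (rule Qbar_eq)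
  have p1: "\<forall>i\<in>{1..d}. prob_space (Q i)" using prob_Qi by blast
  have p3: "\<forall>i\<in>{1..d}. absolutely_continuous Q1 (Q i)" using ac by blast
  have p5: "\<forall>r\<in>{0..T}. \<forall>C\<in>claims d (space Q1) F T S.
         (\<integral>\<^sup>+\<omega>. basket_claim d T S C \<omega> \<partial>Qbar) < \<infinity> \<longrightarrow>
         (AE \<omega> in Q1. nn_cond_exp Qbar (F r) (basket_claim d T S C) \<omega>
                        = basket d S r \<omega> 1 * nn_cond_exp Q1 (F r) (\<lambda>\<omega>. C \<omega> 1) \<omega>)
       \<and> (\<forall>i\<in>{1..d}. AE \<omega> in Q1. i \<in> active d S r \<omega> \<longrightarrow>
             nn_cond_exp Qbar (F r) (basket_claim d T S C) \<omega> / basket d S r \<omega> i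
               = nn_cond_exp (Q i) (F r) (\<lambda>\<omega>. C \<omega> i) \<omega>
                 + S r \<omega> i 1 * nn_cond_exp Q1 (F r)
                     (\<lambda>\<omega>. C \<omega> 1 * indicator {\<omega>\<in>space Q1. S T \<omega> 1 i = 0} \<omega>) \<omega>)"
  proof (intro ballI impI conjI)
    fix r C assume r: "r \<in> {0..T}" and C: "C \<in> claims d (space Q1) F T S"
    show "AE \<omega> in Q1. nn_cond_exp Qbar (F r) (basket_claim d T S C) \<omega>
                        = basket d S r \<omega> 1 * nn_cond_exp Q1 (F r) (\<lambda>\<omega>. C \<omega> 1) \<omega>"
      unfolding Qb by (rule C1[OF r C])
    fix i assume i: "i \<in> {1..d}"
    show "AE \<omega> in Q1. i \<in> active d S r \<omega> \<longrightarrow>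
             nn_cond_exp Qbar (F r) (basket_claim d T S C) \<omega> / basket d S r \<omega> i
               = nn_cond_exp (Q i) (F r) (\<lambda>\<omega>. C \<omega> i) \<omega>
                 + S r \<omega> i 1 * nn_cond_exp Q1 (F r)
                     (\<lambda>\<omega>. C \<omega> 1 * indicator {\<omega>\<in>space Q1. S T \<omega> 1 i = 0} \<omega>) \<omega>"
      unfolding Qb by (rule C2[OF r C i])
  qed
  show ?thesis by (intro conjI p1 numcons p3 eqv p5)
qed


end
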